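(* Let $A$ be a finite set and let $\le_E$ be the ordering on $A^*$ defined below. Then: (1) $(A^*, \le_E)$ has no descending chain and no antichain. (2) $(U(A^*, \le_E), \subseteq)$ has no ascending chain and no antichain.
   Context: $A^* = \bigcup_{n \in \mathbb{N}_0} A^n$ is the set of finite words over $A$. The embedding order $\le_e$ on words over an alphabet is defined by recursion on the length of $x$: the empty word satisfies $\emptyset \le_e y$ for all $y$; if $x = au$ with $a$ a letter and $u$ a word, then $x \le_e y$ iff there are words $v,w$ with $y = vaw$ and $u \le_e w$ (i.e. $x$ is obtained from $y$ by deleting letters). Let $B := (A\times\{0\}) \cup (A \times \{1\})$ and define $\varphi: A^* \to B^*$ by $\varphi(a_1,\dots,a_n) := (b_1,\dots,b_n)$ where $b_i := (a_i,0)$ if $a_i \notin \{a_1,\dots,a_{i-1}\}$ and $b_i := (a_i,1)$ otherwise. For $u = (a_1,\dots,a_n)$ let $S(u) := \{a_1,\dots,a_n\}$. For $u,v \in A^*$, $u \le_E v$ iff $\varphi(u) \le_e \varphi(v)$ and $S(u) = S(v)$. For a partially ordered set $(P,\le)$: a sequence $(a_i)_{i\in\mathbb{N}_0}$ is a descending chain if $a_i > a_{i+1}$ for all $i$, an ascending chain if $a_i < a_{i+1}$ for all $i$, and an antichain if $a_i \le a_j$ implies $i=j$. A subset $U \subseteq P$ is upward closed if $u\in U$, $u \le a$ imply $a \in U$; $U(P,\le)$ denotes the set of upward closed subsets of $P$, ordered by inclusion. *)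

theory Defs
  imports Main
begin

fun emb :: "'b list \<Rightarrow> 'b list \<Rightarrow> bool" where
  "emb [] y = True"
| "emb (a # u) y = (\<exists>v w. y = v @ a # w \<and> emb u w)"

definition phi :: "'a list \<Rightarrow> ('a \<times> nat) list" where
  "phi xs = map (\<lambda>i. (xs ! i, if xs ! i \<in> set (take i xs) then 1 else 0)) [0..<length xs]"

definition S :: "'a list \<Rightarrow> 'a set" where
  "S u = set u"

definition leE :: "'a list \<Rightarrow> 'a list \<Rightarrow> bool" where
  "leE u v \<longleftrightarrow> emb (phi u) (phi v) \<and> S u = S v"

definition words :: "'a set \<Rightarrow> 'a list set" where
  "words A = {xs. set xs \<subseteq> A}"

definition descending_chain :: "'p set \<Rightarrow> ('p \<Rightarrow> 'p \<Rightarrow> bool) \<Rightarrow> (nat \<Rightarrow> 'p) \<Rightarrow> bool" where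
  "descending_chain P le f \<longleftrightarrow>
     (\<forall>i. f i \<in> P) \<and> (\<forall>i. le (f (Suc i)) (f i) \<and> f (Suc i) \<noteq> f i)"

definition ascending_chain :: "'p set \<Rightarrow> ('p \<Rightarrow> 'p \<Rightarrow> bool) \<Rightarrow> (nat \<Rightarrow> 'p) \<Rightarrow> bool" where
  "ascending_chain P le f \<longleftrightarrow>
     (\<forall>i. f i \<in> P) \<and> (\<forall>i. le (f i) (f (Suc i)) \<and> f i \<noteq> f (Suc i))"

definition antichain :: "'p set \<Rightarrow> ('p \<Rightarrow> 'p \<Rightarrow> bool) \<Rightarrow> (nat \<Rightarrow> 'p) \<Rightarrow> bool" where
  "antichain P le f \<longleftrightarrow> (\<forall>i. f i \<in> P) \<and> (\<forall>i j. le (f i) (f j) \<longrightarrow> i = j)"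

definition upward_closed :: "'p set \<Rightarrow> ('p \<Rightarrow> 'p \<Rightarrow> bool) \<Rightarrow> 'p set \<Rightarrow> bool" where
  "upward_closed P le U \<longleftrightarrow> U \<subseteq> P \<and> (\<forall>u a. u \<in> U \<and> a \<in> P \<and> le u a \<longrightarrow> a \<in> U)"

definition upsets :: "'p set \<Rightarrow> ('p \<Rightarrow> 'p \<Rightarrow> bool) \<Rightarrow> 'p set set" where
  "upsets P le = {U. upward_closed P le U}"

end

theory Submission
  imports Defs "HOL-Library.Sublist" "HOL-Library.Infinite_Set"
begin

lemma emb_iff_subseq: "emb x y = subseq x y"
proof (induction x arbitrary: y)
  case Nil then show ?case by simp
next
  case (Cons a u)
  show ?case
  proof
    assume "emb (a # u) y"
    then obtain v w where "y = v @ a # w" "emb u w" unfolding emb.simps by blast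
    then have "subseq u w" using Cons.IH by blast
    then have "subseq (a # u) (a # w)" by simp
    then show "subseq (a # u) y" using \<open>y = v @ a # w\<close> subseq_drop_many by blast
  next
    assume "subseq (a # u) y"
    then obtain us v vs where "y = us @ v # vs" "a = v" "subseq u vs"
      using list_emb_ConsD[of "(=)" a u y] by blast
    then have "emb u vs" using Cons.IH by blast
    then show "emb (a # u) y" unfolding emb.simps using \<open>y = us @ v # vs\<close> \<open>a = v\<close> by blast
  qed
qed

definition almfull :: "('a \<Rightarrow> 'a \<Rightarrow> bool) \<Rightarrow> 'a set \<Rightarrow> bool" where
  "almfull P A \<longleftrightarrow> (\<forall>f::nat \<Rightarrow> 'a. (\<forall>i. f i \<in> A) \<longrightarrow> (\<exists>i j. i < j \<and> P (f i) (f j)))"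



lemma af_finite:
  assumes "finite A" "\<And>x. x \<in> A \<Longrightarrow> P x x"
  shows "almfull P A"
  unfolding almfull_def
proof (intro allI impI)
  fix f :: "nat \<Rightarrow> _" assume f: "\<forall>i. f i \<in> A"
  then have "range f \<subseteq> A" by blast
  then have "finite (range f)" using assms(1) finite_subset by blast
  then have "\<not> inj f"
  proof (intro notI)
    assume "inj f" "finite (range f)"
    then have "finite (UNIV :: nat set)" using finite_imageD by blast
    then show False by simp
  qed
  then obtain i j where ij: "i \<noteq> j" "f i = f j" unfolding inj_def by blast
  have Pi: "P (f i) (f j)" "P (f j) (f i)" using assms(2) f ij(2) by metis+
  show "\<exists>i j. i < j \<and> P (f i) (f j)"
  proof (cases "i < j")
    case True then show ?thesis using Pi by blast
  next
    case False then have "j < i" using ij(1) by simp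
    then show ?thesis using Pi by blast
  qed
qed

lemma almfullD:
  fixes g :: "nat \<Rightarrow> 'a"
  assumes "almfull P A" "\<And>i. g i \<in> A"
  shows "\<exists>i j. i < j \<and> P (g i) (g j)"
proof -
  have "(\<forall>i. g i \<in> A) \<longrightarrow> (\<exists>i j. i < j \<and> P (g i) (g j))"
    using assms(1) unfolding almfull_def by (elim allE[of _ g])
  moreover have "\<forall>i. g i \<in> A" using assms(2) by blast
  ultimately show ?thesis by (rule mp)
qed

lemma af_chain:
  fixes f :: "nat \<Rightarrow> 'a"
  assumes almfull: "almfull P A" and tr: "\<And>x y z. P x y \<Longrightarrow> P y z \<Longrightarrow> P x z"
    and f: "\<And>i. f i \<in> A"
  shows "\<exists>\<phi>::nat \<Rightarrow> nat. strict_mono \<phi> \<and> (\<forall>i j. i < j \<longrightarrow> P (f (\<phi> i)) (f (\<phi> j)))"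
proof -
  define T :: "nat set" where "T = {i. \<not> (\<exists>j>i. P (f i) (f j))}"
  have "finite T"
  proof (rule ccontr)
    assume "infinite T"
    define t where "t = enumerate T"
    have sm: "strict_mono t" unfolding strict_mono_def t_def using \<open>infinite T\<close> enumerate_mono by (intro allI impI) simp
    have tT: "t i \<in> T" for i unfolding t_def using \<open>infinite T\<close> by (rule enumerate_in_set)
    obtain i j where "i < j" "P (f (t i)) (f (t j))" using almfullD[of P A "\<lambda>i. f (t i)"] almfull f by blast
    moreover have "t i < t j" using sm \<open>i < j\<close> unfolding strict_mono_def by blast
    ultimately have "t i \<notin> T" unfolding T_def by blast
    then show False using tT by blast
  qed
  then obtain N where N: "\<forall>i\<in>T. i < N"
    using finite_nat_set_iff_bounded by blast
  have step: "\<exists>j>i. P (f i) (f j)" if "i \<ge> N" for i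
  proof (rule ccontr)
    assume "\<not> ?thesis" then have "i \<in> T" unfolding T_def by blast
    then show False using N that by auto
  qed
  define nx where "nx i = (SOME j. j > i \<and> P (f i) (f j))" for i
  have nx: "nx i > i \<and> P (f i) (f (nx i))" if "i \<ge> N" for i
    using someI_ex[OF step[OF that]] unfolding nx_def by blast
  define \<phi> where "\<phi> = rec_nat N (\<lambda>_ i. nx i)"
  have phiN: "\<phi> i \<ge> N" for i
  proof (induction i)
    case 0 then show ?case by (simp add: \<phi>_def)
  next
    case (Suc i) then show ?case using nx[of "\<phi> i"] by (simp add: \<phi>_def)
  qed
  have phiS: "\<phi> (Suc i) > \<phi> i \<and> P (f (\<phi> i)) (f (\<phi> (Suc i)))" for i
    using nx[OF phiN[of i]] by (simp add: \<phi>_def)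
  have sm: "strict_mono \<phi>" using phiS by (simp add: strict_mono_Suc_iff)
  have "P (f (\<phi> i)) (f (\<phi> (i + Suc k)))" for i k
  proof (induction k)
    case 0 then show ?case using phiS[of i] by simp
  next
    case (Suc k) then show ?case using phiS[of "i + Suc k"] tr[of "f (\<phi> i)" "f (\<phi> (i + Suc k))" "f (\<phi> (Suc (i + Suc k)))"] by simp
  qed
  note A = this
  have "\<forall>i j. i < j \<longrightarrow> P (f (\<phi> i)) (f (\<phi> j))"
  proof (intro allI impI)
    fix i j :: nat assume "i < j"
    obtain k where "j = Suc (i + k)" using less_imp_Suc_add[OF \<open>i < j\<close>] by blast
    then have "j = i + Suc k" by simp
    then show "P (f (\<phi> i)) (f (\<phi> j))" using A[of i k] by simp
  qed
  with sm show ?thesis by blast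
qed

lemma higman:
  fixes P :: "'a \<Rightarrow> 'a \<Rightarrow> bool"
  assumes af: "almfull P A" and tr: "\<And>x y z. P x y \<Longrightarrow> P y z \<Longrightarrow> P x z"
  shows "almfull (list_emb P) (lists A)"
  unfolding almfull_def
proof (intro allI impI)
  fix f0 :: "nat \<Rightarrow> 'a list"
  assume f0: "\<forall>i. f0 i \<in> lists A"
  show "\<exists>i j. i < j \<and> list_emb P (f0 i) (f0 j)"
  proof (rule ccontr)
    assume nb: "\<not> (\<exists>i j. i < j \<and> list_emb P (f0 i) (f0 j))"
    define BAD where "BAD = {g::nat \<Rightarrow> 'a list. (\<forall>i. g i \<in> lists A) \<and> \<not> (\<exists>i j. i < j \<and> list_emb P (g i) (g j))}"
    have f0B: "f0 \<in> BAD" using f0 nb unfolding BAD_def by blast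
    define pick where "pick g n = (SOME g'. g' \<in> BAD \<and> (\<forall>k<n. g' k = g k) \<and>
        (\<forall>g''\<in>BAD. (\<forall>k<n. g'' k = g k) \<longrightarrow> length (g' n) \<le> length (g'' n)))"
      for g :: "nat \<Rightarrow> 'a list" and n :: nat
    have pick: "pick g n \<in> BAD \<and> (\<forall>k<n. pick g n k = g k) \<and>
        (\<forall>g''\<in>BAD. (\<forall>k<n. g'' k = g k) \<longrightarrow> length (pick g n n) \<le> length (g'' n))"
      if "g \<in> BAD" for g n
    proof -
      have "\<exists>x. (x \<in> BAD \<and> (\<forall>k<n. x k = g k)) \<and>
          (\<forall>y. (y \<in> BAD \<and> (\<forall>k<n. y k = g k)) \<longrightarrow> length (x n) \<le> length (y n))"
        by (rule ex_has_least_nat[of "\<lambda>x. x \<in> BAD \<and> (\<forall>k<n. x k = g k)" g "\<lambda>x. length (x n)"])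
          (simp add: that)
      then have "\<exists>g'. g' \<in> BAD \<and> (\<forall>k<n. g' k = g k) \<and>
        (\<forall>g''\<in>BAD. (\<forall>k<n. g'' k = g k) \<longrightarrow> length (g' n) \<le> length (g'' n))" by blast
      from someI_ex[OF this] show ?thesis unfolding pick_def .
    qed
    define G where "G = rec_nat (pick f0 0) (\<lambda>n g. pick g (Suc n))"
    have G0: "G 0 = pick f0 0" and GS: "G (Suc n) = pick (G n) (Suc n)" for n
      unfolding G_def by simp_all
    have GB: "G n \<in> BAD" for n
    proof (induction n)
      case 0 then show ?case using pick[OF f0B] G0 by simp
    next
      case (Suc n) then show ?case using pick[OF Suc] GS by simp
    qed
    have Gagree: "G (n + d) k = G n k" if "k \<le> n" for n d k
    proof (induction d)
      case 0 then show ?case by simp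
    next
      case (Suc d)
      have "G (n + Suc d) k = pick (G (n + d)) (Suc (n + d)) k" using GS by simp
      also have "\<dots> = G (n + d) k" using pick[OF GB[of "n + d"], of "Suc (n + d)"] that by simp
      finally show ?case using Suc by simp
    qed
    define m where "m k = G k k" for k
    have m_eq: "m k = G n k" if "k \<le> n" for k n
    proof -
      have "G n k = G (k + (n - k)) k" using that by simp
      also have "\<dots> = G k k" by (rule Gagree) simp
      finally show ?thesis unfolding m_def by simp
    qed
    have mA: "m i \<in> lists A" for i
      using GB[of i] unfolding BAD_def m_def by blast
    have mbad: "\<not> list_emb P (m i) (m j)" if "i < j" for i j
    proof
      assume "list_emb P (m i) (m j)"
      then have "list_emb P (G j i) (G j j)" using m_eq[of i j] m_eq[of j j] that by simp
      then show False using GB[of j] that unfolding BAD_def by blast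
    qed
    have mmin: "length (m n) \<le> length (g n)" if g: "g \<in> BAD" "\<forall>k<n. g k = m k" for g n
    proof (cases n)
      case 0
      have "length (pick f0 0 0) \<le> length (g 0)" using pick[OF f0B, of 0] g(1) by blast
      then show ?thesis using 0 G0 unfolding m_def by simp
    next
      case (Suc n')
      have "\<forall>k<n. g k = G n' k" using g(2) m_eq Suc by simp
      then have "length (pick (G n') n n) \<le> length (g n)" using pick[OF GB[of n'], of n] g(1) by blast
      then show ?thesis using Suc GS unfolding m_def by simp
    qed
    have mne: "m i \<noteq> []" for i
    proof
      assume "m i = []"
      then have "list_emb P (m i) (m (Suc i))" by simp
      then show False using mbad[of i "Suc i"] by simp
    qed
    define a where "a i = hd (m i)" for i
    define t where "t i = tl (m i)" for i
    have mat: "m i = a i # t i" for i using mne[of i] unfolding a_def t_def by simp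
    have aA: "a i \<in> A" for i using mA[of i] mat[of i] by (metis Cons_in_lists_iff)
    have tA: "t i \<in> lists A" for i using mA[of i] mat[of i] by (metis Cons_in_lists_iff)
    have "\<exists>\<phi>::nat \<Rightarrow> nat. strict_mono \<phi> \<and> (\<forall>i j. i < j \<longrightarrow> P (a (\<phi> i)) (a (\<phi> j)))"
    proof (rule af_chain)
      show "almfull P A" by (rule af)
      show "P x z" if "P x y" "P y z" for x y z using that by (rule tr)
      show "a i \<in> A" for i by (rule aA)
    qed
    then obtain \<phi> :: "nat \<Rightarrow> nat" where sm: "strict_mono \<phi>" and ch: "\<forall>i j. i < j \<longrightarrow> P (a (\<phi> i)) (a (\<phi> j))"
      by blast
    have phi0: "\<phi> 0 \<le> \<phi> n" for n
    proof (cases n)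
      case 0 then show ?thesis by simp
    next
      case (Suc n') then have "\<phi> 0 < \<phi> n" using sm unfolding strict_mono_def by simp
      then show ?thesis by simp
    qed
    define g where "g k = (if k < \<phi> 0 then m k else t (\<phi> (k - \<phi> 0)))" for k
    have gA: "\<forall>i. g i \<in> lists A" unfolding g_def using mA tA by simp
    have gagree: "\<forall>k<\<phi> 0. g k = m k" unfolding g_def by simp
    have "length (g (\<phi> 0)) < length (m (\<phi> 0))" unfolding g_def using mat[of "\<phi> 0"] by simp
    then have "g \<notin> BAD" using mmin[of g "\<phi> 0"] gagree by fastforce
    then obtain i j where ij: "i < j" "list_emb P (g i) (g j)" using gA unfolding BAD_def by blast
    show False
    proof (cases "j < \<phi> 0")
      case True
      then show False using ij mbad[of i j] unfolding g_def by simp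
    next
      case jge: False
      show False
      proof (cases "i < \<phi> 0")
        case True
        then have "list_emb P (m i) (t (\<phi> (j - \<phi> 0)))" using ij jge unfolding g_def by simp
        then have "list_emb P (m i) (m (\<phi> (j - \<phi> 0)))" using mat[of "\<phi> (j - \<phi> 0)"] by (simp add: list_emb_Cons)
        moreover have "i < \<phi> (j - \<phi> 0)" using True phi0[of "j - \<phi> 0"] by simp
        ultimately show False using mbad by blast
      next
        case False
        define i' where "i' = i - \<phi> 0"
        define j' where "j' = j - \<phi> 0"
        have "i' < j'" using ij(1) False unfolding i'_def j'_def by simp
        have "list_emb P (t (\<phi> i')) (t (\<phi> j'))" using ij False jge unfolding g_def i'_def j'_def by simp
        moreover have "P (a (\<phi> i')) (a (\<phi> j'))" using ch \<open>i' < j'\<close> by blast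
        ultimately have "list_emb P (m (\<phi> i')) (m (\<phi> j'))" using mat by (simp add: list_emb_Cons2)
        moreover have "\<phi> i' < \<phi> j'" using sm \<open>i' < j'\<close> unfolding strict_mono_def by blast
        ultimately show False using mbad by blast
      qed
    qed
  qed
qed

datatype 'b atom = Opt 'b | Star "'b set"

fun alang :: "'b atom \<Rightarrow> 'b list set" where
  "alang (Opt a) = {[], [a]}"
| "alang (Star C) = lists C"

fun lang :: "'b atom list \<Rightarrow> 'b list set" where
  "lang [] = {[]}"
| "lang (X # P) = {u @ v | u v. u \<in> alang X \<and> v \<in> lang P}"

fun atom_ok :: "'b set \<Rightarrow> 'b atom \<Rightarrow> bool" where
  "atom_ok B (Opt a) = (a \<in> B)"
| "atom_ok B (Star C) = (C \<subseteq> B)"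

fun le_atom :: "'b atom \<Rightarrow> 'b atom \<Rightarrow> bool" where
  "le_atom (Opt a) (Opt b) = (a = b)"
| "le_atom (Opt a) (Star C) = (a \<in> C)"
| "le_atom (Star C) (Star D) = (C \<subseteq> D)"
| "le_atom (Star C) (Opt b) = False"

definition oks :: "'b set \<Rightarrow> 'b atom list \<Rightarrow> bool" where
  "oks B Q \<longleftrightarrow> (\<forall>X\<in>set Q. atom_ok B X)"

definition downcl :: "'b list set \<Rightarrow> bool" where
  "downcl D \<longleftrightarrow> (\<forall>x\<in>D. \<forall>y. subseq y x \<longrightarrow> y \<in> D)"

lemma nil_alang: "[] \<in> alang X"
  by (cases X) auto

lemma nil_lang: "[] \<in> lang P"
proof (induction P)
  case Nil then show ?case by simp
next
  case (Cons X P)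
  have "[] = [] @ []" by simp
  then show ?case using nil_alang[of X] Cons by fastforce
qed

lemma alang_mono: "le_atom X Y \<Longrightarrow> alang X \<subseteq> alang Y"
  by (cases X; cases Y) auto

lemma le_atom_refl: "le_atom X X"
  by (cases X) auto

lemma le_atom_trans: "le_atom X Y \<Longrightarrow> le_atom Y Z \<Longrightarrow> le_atom X Z"
  by (cases X; cases Y; cases Z) auto

lemma lang_mono: "list_emb le_atom P Q \<Longrightarrow> lang P \<subseteq> lang Q"
proof (induction rule: list_emb.induct)
  case (list_emb_Nil ys) then show ?case using nil_lang[of ys] by simp
next
  case (list_emb_Cons xs ys y)
  show ?case
  proof
    fix x assume "x \<in> lang xs"
    then have "x \<in> lang ys" using list_emb_Cons by blast
    then have "[] @ x \<in> lang (y # ys)" using nil_alang[of y] by (simp only: lang.simps) blast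
    then show "x \<in> lang (y # ys)" by simp
  qed
next
  case (list_emb_Cons2 x y xs ys)
  show ?case
  proof
    fix z assume "z \<in> lang (x # xs)"
    then obtain u v where "z = u @ v" "u \<in> alang x" "v \<in> lang xs" by auto
    then have "u \<in> alang y" "v \<in> lang ys" using alang_mono[OF list_emb_Cons2(1)] list_emb_Cons2(3) by blast+
    then show "z \<in> lang (y # ys)" using \<open>z = u @ v\<close> by auto
  qed
qed

lemma lang_lists: "oks B P \<Longrightarrow> lang P \<subseteq> lists B"
proof (induction P)
  case Nil then show ?case by simp
next
  case (Cons X P)
  have "alang X \<subseteq> lists B" using Cons.prems unfolding oks_def by (cases X) auto
  moreover have "lang P \<subseteq> lists B" using Cons unfolding oks_def by simp
  ultimately show ?case by force
qed

lemma subseq_single: "subseq y [a] \<Longrightarrow> y = [] \<or> y = [a]"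
proof (cases y)
  case Nil then show ?thesis by simp
next
  case (Cons b ys)
  assume "subseq y [a]"
  then have "b = a \<and> subseq ys []" using Cons by (cases "b = a") auto
  then show ?thesis using Cons list_emb_Nil2 by blast
qed


lemma subseq_set: "subseq y u \<Longrightarrow> set y \<subseteq> set u"
  by (induction rule: list_emb.induct) auto

lemma downcl_alang: "x \<in> alang X \<Longrightarrow> subseq y x \<Longrightarrow> y \<in> alang X"
proof (cases X)
  case (Opt a)
  assume "x \<in> alang X" "subseq y x"
  then show ?thesis using Opt subseq_single[of y a] by auto
next
  case (Star C)
  assume "x \<in> alang X" "subseq y x"
  then show ?thesis using Star subseq_set[of y x] by auto
qed

lemma downcl_lang: "downcl (lang P)"
  unfolding downcl_def
proof (induction P)
  case Nil then show ?case by simp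
next
  case (Cons X P)
  show ?case
  proof (intro ballI allI impI)
    fix x y assume "x \<in> lang (X # P)" "subseq y x"
    then obtain u v where uv: "x = u @ v" "u \<in> alang X" "v \<in> lang P" by auto
    then obtain y1 y2 where "y = y1 @ y2" "subseq y1 u" "subseq y2 v"
      using \<open>subseq y x\<close> subseq_appendE by blast
    then have "y1 \<in> alang X" "y2 \<in> lang P" using downcl_alang uv Cons.IH by blast+
    then show "y \<in> lang (X # P)" using \<open>y = y1 @ y2\<close> by auto
  qed
qed

lemma subseq_skip: "a \<notin> set u \<Longrightarrow> subseq (a # w) (u @ v) \<Longrightarrow> subseq (a # w) v"
proof (induction u)
  case Nil then show ?case by simp
next
  case (Cons b u)
  then have "b \<noteq> a" by auto
  then have "subseq (a # w) (u @ v)" using Cons.prems(2) subseq_Cons2_neq[of a w b "u @ v"] by simp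
  then show ?case using Cons by simp
qed

definition covers :: "'b set \<Rightarrow> 'b atom list \<Rightarrow> 'b list \<Rightarrow> 'b atom list list \<Rightarrow> bool" where
  "covers B P w Ps \<longleftrightarrow> (\<forall>Q\<in>set Ps. oks B Q \<and> lang Q \<subseteq> lang P \<and> (\<forall>x\<in>lang Q. \<not> subseq w x))
     \<and> (\<forall>x\<in>lang P. \<not> subseq w x \<longrightarrow> (\<exists>Q\<in>set Ps. x \<in> lang Q))"

lemma lang_ConsI: "u \<in> alang X \<Longrightarrow> v \<in> lang P \<Longrightarrow> u @ v \<in> lang (X # P)"
  by auto

lemma lang_ConsE: "x \<in> lang (X # P) \<Longrightarrow> (\<And>u v. x = u @ v \<Longrightarrow> u \<in> alang X \<Longrightarrow> v \<in> lang P \<Longrightarrow> R) \<Longrightarrow> R"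
  by auto

lemma lang_Cons_iff: "x \<in> lang (X # P) \<longleftrightarrow> (\<exists>u v. x = u @ v \<and> u \<in> alang X \<and> v \<in> lang P)"
  by simp

lemma lang_Cons2E:
  assumes "x \<in> lang (X # Y # P)"
  obtains u y z where "x = u @ y @ z" "u \<in> alang X" "y \<in> alang Y" "z \<in> lang P"
proof -
  obtain u r where "x = u @ r" "u \<in> alang X" "r \<in> lang (Y # P)"
    using assms unfolding lang_Cons_iff by blast
  moreover obtain y z where "r = y @ z" "y \<in> alang Y" "z \<in> lang P"
    using \<open>r \<in> lang (Y # P)\<close> unfolding lang_Cons_iff by blast
  ultimately show ?thesis using that by blast
qed

lemma cov_Nil: "\<exists>Ps. covers B [] w Ps"
proof (cases "w = []")
  case True
  then have "covers B [] w []" unfolding covers_def by simp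
  then show ?thesis by blast
next
  case False
  have "\<not> subseq w []" using False list_emb_Nil2 by blast
  then have "covers B [] w [[]]" unfolding covers_def oks_def by simp
  then show ?thesis by blast
qed

lemma cov_Opt_eq:
  assumes "a \<in> B" "covers B P (a # w) Ps1" "covers B P w Ps2"
  shows "covers B (Opt a # P) (a # w) (Ps1 @ map ((#) (Opt a)) Ps2)"
  unfolding covers_def
proof (rule conjI[OF ballI ballI[OF impI]])
  fix Q assume "Q \<in> set (Ps1 @ map ((#) (Opt a)) Ps2)"
  then consider "Q \<in> set Ps1" | Q2 where "Q2 \<in> set Ps2" "Q = Opt a # Q2" by auto
  then show "oks B Q \<and> lang Q \<subseteq> lang (Opt a # P) \<and> (\<forall>x\<in>lang Q. \<not> subseq (a # w) x)"
  proof cases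
    case 1
    then have h: "oks B Q" "lang Q \<subseteq> lang P" "\<forall>x\<in>lang Q. \<not> subseq (a # w) x"
      using assms(2) unfolding covers_def by blast+
    have "lang P \<subseteq> lang (Opt a # P)"
    proof
      fix x assume "x \<in> lang P"
      then have "[] @ x \<in> lang (Opt a # P)" by (intro lang_ConsI) simp_all
      then show "x \<in> lang (Opt a # P)" by simp
    qed
    then show ?thesis using h by blast
  next
    case 2
    then have h: "oks B Q2" "lang Q2 \<subseteq> lang P" "\<forall>x\<in>lang Q2. \<not> subseq w x"
      using assms(3) unfolding covers_def by blast+
    have "oks B Q" using h(1) assms(1) 2 unfolding oks_def by simp
    moreover have "lang Q \<subseteq> lang (Opt a # P)" using h(2) 2 by auto
    moreover have "\<not> subseq (a # w) x" if "x \<in> lang Q" for x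
    proof
      assume sx: "subseq (a # w) x"
      from that 2 obtain u v where uv: "x = u @ v" "u \<in> {[], [a]}" "v \<in> lang Q2" by auto
      then have "subseq w v"
      proof (cases "u = []")
        case True then show ?thesis using sx uv subseq_Cons' by auto
      next
        case False then have "u = [a]" using uv by auto
        then show ?thesis using sx uv by simp
      qed
      then show False using h(3) uv by blast
    qed
    ultimately show ?thesis by blast
  qed
next
  fix x assume x: "x \<in> lang (Opt a # P)" "\<not> subseq (a # w) x"
  from x(1) obtain u v where uv: "x = u @ v" "u \<in> {[], [a]}" "v \<in> lang P" by auto
  show "\<exists>Q\<in>set (Ps1 @ map ((#) (Opt a)) Ps2). x \<in> lang Q"
  proof (cases "u = []")
    case True
    then obtain Q where "Q \<in> set Ps1" "x \<in> lang Q" using assms(2) x uv unfolding covers_def by auto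
    then show ?thesis by auto
  next
    case False then have u: "u = [a]" using uv by auto
    then have "\<not> subseq w v" using x uv by auto
    then obtain Q where Q: "Q \<in> set Ps2" "v \<in> lang Q" using assms(3) uv unfolding covers_def by blast
    then have "u @ v \<in> lang (Opt a # Q)" using u by (intro lang_ConsI) simp_all
    moreover have "Opt a # Q \<in> set (Ps1 @ map ((#) (Opt a)) Ps2)" using Q by simp
    ultimately show ?thesis using uv(1) by blast
  qed
qed

lemma cov_Opt_neq:
  assumes "b \<in> B" "b \<noteq> a" "covers B P (a # w) Ps1"
  shows "covers B (Opt b # P) (a # w) (map ((#) (Opt b)) Ps1)"
  unfolding covers_def
proof (rule conjI[OF ballI ballI[OF impI]])
  fix Q assume "Q \<in> set (map ((#) (Opt b)) Ps1)"
  then obtain Q1 where Q1: "Q1 \<in> set Ps1" "Q = Opt b # Q1" by auto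
  then have h: "oks B Q1" "lang Q1 \<subseteq> lang P" "\<forall>x\<in>lang Q1. \<not> subseq (a # w) x"
    using assms(3) unfolding covers_def by blast+
  have "oks B Q" using h(1) assms(1) Q1 unfolding oks_def by simp
  moreover have "lang Q \<subseteq> lang (Opt b # P)" using h(2) Q1 by auto
  moreover have "\<not> subseq (a # w) x" if "x \<in> lang Q" for x
  proof
    assume sx: "subseq (a # w) x"
    from that Q1 obtain u v where uv: "x = u @ v" "u \<in> {[], [b]}" "v \<in> lang Q1" by auto
    then have "subseq (a # w) v"
    proof (cases "u = []")
      case True then show ?thesis using sx uv by auto
    next
      case False then have "u = [b]" using uv by auto
      then show ?thesis using sx uv assms(2) by simp
    qed
    then show False using h(3) uv by blast
  qed
  ultimately show "oks B Q \<and> lang Q \<subseteq> lang (Opt b # P) \<and> (\<forall>x\<in>lang Q. \<not> subseq (a # w) x)" by blast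
next
  fix x assume x: "x \<in> lang (Opt b # P)" "\<not> subseq (a # w) x"
  from x(1) obtain u v where uv: "x = u @ v" "u \<in> alang (Opt b)" "v \<in> lang P" by auto
  have "\<not> subseq (a # w) v" using x(2) uv(1) subseq_drop_many by blast
  then obtain Q where Q: "Q \<in> set Ps1" "v \<in> lang Q" using assms(3) uv unfolding covers_def by blast
  then have "u @ v \<in> lang (Opt b # Q)" using uv by (intro lang_ConsI) simp_all
  moreover have "Opt b # Q \<in> set (map ((#) (Opt b)) Ps1)" using Q by simp
  ultimately show "\<exists>Q\<in>set (map ((#) (Opt b)) Ps1). x \<in> lang Q" using uv(1) by blast
qed

lemma cov_Star:
  assumes CB: "C \<subseteq> B" and c1: "covers B P (a # w) Ps1" and c3: "covers B (Star C # P) w Ps3"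
  defines "C' \<equiv> C - {a}"
  defines "Ps \<equiv> map ((#) (Star C')) Ps1 @ (if a \<in> C then map (\<lambda>Q. Star C' # Opt a # Q) Ps3 else [])"
  shows "covers B (Star C # P) (a # w) Ps"
  unfolding covers_def
proof (rule conjI[OF ballI ballI[OF impI]])
  fix Q assume "Q \<in> set Ps"
  then consider Q1 where "Q1 \<in> set Ps1" "Q = Star C' # Q1"
    | Q3 where "a \<in> C" "Q3 \<in> set Ps3" "Q = Star C' # Opt a # Q3"
    unfolding Ps_def by (cases "a \<in> C") auto
  then show "oks B Q \<and> lang Q \<subseteq> lang (Star C # P) \<and> (\<forall>x\<in>lang Q. \<not> subseq (a # w) x)"
  proof cases
    case 1
    then have h: "oks B Q1" "lang Q1 \<subseteq> lang P" "\<forall>x\<in>lang Q1. \<not> subseq (a # w) x"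
      using c1 unfolding covers_def by blast+
    have "oks B Q" using h(1) CB 1 unfolding oks_def C'_def by auto
    moreover have "lang Q \<subseteq> lang (Star C # P)"
    proof
      fix x assume "x \<in> lang Q"
      then have "x \<in> lang (Star C' # Q1)" using 1 by simp
      then obtain u v where uv: "x = u @ v" "u \<in> alang (Star C')" "v \<in> lang Q1"
        unfolding lang_Cons_iff by blast
      have "u \<in> alang (Star C)" using uv(2) unfolding C'_def by auto
      moreover have "v \<in> lang P" using uv(3) h(2) by blast
      ultimately show "x \<in> lang (Star C # P)" using uv(1) lang_ConsI by blast
    qed
    moreover have "\<not> subseq (a # w) x" if "x \<in> lang Q" for x
    proof
      assume sx: "subseq (a # w) x"
      have "x \<in> lang (Star C' # Q1)" using 1 that by simp
      then obtain u v where uv: "x = u @ v" "u \<in> alang (Star C')" "v \<in> lang Q1"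
        unfolding lang_Cons_iff by blast
      then have "a \<notin> set u" unfolding C'_def by auto
      then have "subseq (a # w) v" using subseq_skip[of a u w v] sx uv(1) by simp
      then show False using h(3) uv by blast
    qed
    ultimately show ?thesis by blast
  next
    case 2
    then have h: "oks B Q3" "lang Q3 \<subseteq> lang (Star C # P)" "\<forall>x\<in>lang Q3. \<not> subseq w x"
      using c3 unfolding covers_def by blast+
    have "oks B Q" using h(1) CB 2 unfolding oks_def C'_def by auto
    moreover have "lang Q \<subseteq> lang (Star C # P)"
    proof
      fix x assume "x \<in> lang Q"
      then have "x \<in> lang (Star C' # Opt a # Q3)" using 2 by simp
      then obtain u1 y z where x: "x = u1 @ y @ z" "u1 \<in> lists C'" "y \<in> {[], [a]}" "z \<in> lang Q3"
        by (rule lang_Cons2E) simp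
      then have "z \<in> lang (Star C # P)" using h(2) by blast
      then obtain u2 v where z: "z = u2 @ v" "u2 \<in> lists C" "v \<in> lang P" by auto
      have "u1 @ y @ u2 \<in> lists C" using x z 2 unfolding C'_def by auto
      then have "(u1 @ y @ u2) @ v \<in> lang (Star C # P)" using z by (intro lang_ConsI) simp_all
      then show "x \<in> lang (Star C # P)" using x z by simp
    qed
    moreover have "\<not> subseq (a # w) x" if "x \<in> lang Q" for x
    proof
      assume sx: "subseq (a # w) x"
      have "x \<in> lang (Star C' # Opt a # Q3)" using 2 that by simp
      then obtain u1 y z where x: "x = u1 @ y @ z" "u1 \<in> lists C'" "y \<in> {[], [a]}" "z \<in> lang Q3"
        by (rule lang_Cons2E) simp
      then have "a \<notin> set u1" unfolding C'_def by auto
      then have s2: "subseq (a # w) (y @ z)" using subseq_skip[of a u1 w "y @ z"] sx x(1) by simp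
      have "subseq w z"
      proof (cases "y = []")
        case True then show ?thesis using s2 subseq_Cons'[of a w z] by simp
      next
        case False then have "y = [a]" using x(3) by simp
        then show ?thesis using s2 by simp
      qed
      then show False using h(3) x by blast
    qed
    ultimately show ?thesis by blast
  qed
next
  fix x assume x: "x \<in> lang (Star C # P)" "\<not> subseq (a # w) x"
  from x(1) obtain u v where uv: "x = u @ v" "u \<in> lists C" "v \<in> lang P" by auto
  show "\<exists>Q\<in>set Ps. x \<in> lang Q"
  proof (cases "a \<in> set u")
    case False
    have "\<not> subseq (a # w) v" using x(2) uv(1) subseq_drop_many by blast
    then obtain Q where Q: "Q \<in> set Ps1" "v \<in> lang Q" using c1 uv unfolding covers_def by blast
    have "u \<in> lists C'" using uv(2) False unfolding C'_def by auto
    then have "u @ v \<in> lang (Star C' # Q)" using Q by (intro lang_ConsI) simp_all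
    moreover have "Star C' # Q \<in> set Ps" using Q unfolding Ps_def by simp
    ultimately show ?thesis using uv(1) by blast
  next
    case True
    then obtain u1 u2 where u: "u = u1 @ a # u2" "a \<notin> set u1" using split_list_first by metis
    have aC: "a \<in> C" using True uv(2) by auto
    have u1C: "u1 \<in> lists C'" using u uv(2) unfolding C'_def by auto
    have u2C: "u2 \<in> lists C" using u uv(2) by auto
    have zL: "u2 @ v \<in> lang (Star C # P)" using u2C uv(3) by (intro lang_ConsI) simp_all
    have "\<not> subseq w (u2 @ v)"
    proof
      assume "subseq w (u2 @ v)"
      then have "subseq (a # w) (a # u2 @ v)" by simp
      then have "subseq (a # w) (u1 @ a # u2 @ v)" using subseq_drop_many by blast
      then show False using x(2) uv(1) u(1) by simp
    qed
    then obtain Q where Q: "Q \<in> set Ps3" "u2 @ v \<in> lang Q" using c3 zL unfolding covers_def by blast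
    have "[a] @ (u2 @ v) \<in> lang (Opt a # Q)" using Q by (intro lang_ConsI) simp_all
    moreover have u1A: "u1 \<in> alang (Star C')" using u1C by simp
    ultimately have "u1 @ ([a] @ (u2 @ v)) \<in> lang (Star C' # Opt a # Q)" using lang_ConsI by blast
    moreover have "Star C' # Opt a # Q \<in> set Ps" using Q aC unfolding Ps_def by simp
    moreover have "x = u1 @ ([a] @ (u2 @ v))" using uv(1) u(1) by simp
    ultimately show ?thesis by metis
  qed
qed

lemma cov: "oks B P \<Longrightarrow> \<exists>Ps. covers B P w Ps"
proof (induction P arbitrary: w)
  case Nil show ?case by (rule cov_Nil)
next
  case (Cons X P)
  have okP: "oks B P" using Cons.prems unfolding oks_def by simp
  have okX: "atom_ok B X" using Cons.prems unfolding oks_def by simp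
  note IHo = Cons.IH[OF okP]
  show ?case
  proof (induction w)
    case Nil
    have "covers B (X # P) [] []" unfolding covers_def by simp
    then show ?case by blast
  next
    case (Cons a w)
    obtain Ps1 where c1: "covers B P (a # w) Ps1" using IHo by blast
    obtain Ps2 where c2: "covers B P w Ps2" using IHo by blast
    obtain Ps3 where c3: "covers B (X # P) w Ps3" using Cons.IH by blast
    show ?case
    proof (cases X)
      case (Opt b)
      show ?thesis
      proof (cases "b = a")
        case True
        have "b \<in> B" using okX Opt by simp
        then show ?thesis using cov_Opt_eq[OF _ c1 c2] Opt True by blast
      next
        case False
        have "b \<in> B" using okX Opt by simp
        then show ?thesis using cov_Opt_neq[OF _ False c1] Opt by blast
      qed
    next
      case (Star C)
      have "C \<subseteq> B" using okX Star by simp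
      then show ?thesis using cov_Star[of C B P a w Ps1 Ps3] c1 c3 Star by blast
    qed
  qed
qed

lemma af_lists_eq:
  assumes "finite B"
  shows "almfull subseq (lists B)"
proof -
  have "almfull (=) B" by (rule af_finite[OF assms]) simp
  then show ?thesis by (rule higman) simp
qed

lemma dcc:
  assumes "finite B"
  shows "wf {(X, Y). X \<subset> Y \<and> Y \<subseteq> lists B \<and> downcl X}"
proof -
  have "\<not> (\<exists>f. \<forall>i. (f (Suc i), f i) \<in> {(X, Y). X \<subset> Y \<and> Y \<subseteq> lists B \<and> downcl X})"
  proof
    assume "\<exists>f. \<forall>i. (f (Suc i), f i) \<in> {(X, Y). X \<subset> Y \<and> Y \<subseteq> lists B \<and> downcl X}"
    then obtain f :: "nat \<Rightarrow> _" where f0: "\<forall>i. (f (Suc i), f i) \<in> {(X, Y). X \<subset> Y \<and> Y \<subseteq> lists B \<and> downcl X}"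
      by (elim exE)
    have f1: "f (Suc i) \<subset> f i" and f2: "f i \<subseteq> lists B" and f3: "downcl (f (Suc i))" for i
      using spec[OF f0, of i] by simp_all
    have ex: "\<exists>x. x \<in> f i \<and> x \<notin> f (Suc i)" for i
    proof -
      obtain b where "b \<in> f i - f (Suc i)" using psubset_imp_ex_mem[OF f1[of i]] by (elim exE)
      then show ?thesis by (intro exI[of _ b]) simp
    qed
    define x where "x i = (SOME x. x \<in> f i \<and> x \<notin> f (Suc i))" for i
    have x1: "x i \<in> f i" and x2: "x i \<notin> f (Suc i)" for i
      using someI_ex[OF ex[of i]] unfolding x_def by simp_all
    have xB: "x i \<in> lists B" for i using f2[of i] x1[of i] by (rule subsetD)
    have "\<exists>i j. i < j \<and> subseq (x i) (x j)"
      by (rule almfullD[OF af_lists_eq[OF assms]]) (rule xB)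
    then obtain i j where ij: "i < j" "subseq (x i) (x j)" by (elim exE conjE)
    have dec: "f (Suc i + d) \<subseteq> f (Suc i)" for d
    proof (induction d)
      case 0 then show ?case by simp
    next
      case (Suc d)
      have "f (Suc i + Suc d) \<subseteq> f (Suc i + d)" using f1[of "Suc i + d"] by simp
      then show ?case using Suc.IH by (rule subset_trans)
    qed
    have "j = Suc i + (j - Suc i)" using ij(1) by simp
    then have "f j \<subseteq> f (Suc i)" using dec[of "j - Suc i"] by simp
    then have "x j \<in> f (Suc i)" using x1[of j] by (rule subsetD)
    moreover have "\<forall>z\<in>f (Suc i). \<forall>y. subseq y z \<longrightarrow> y \<in> f (Suc i)" using f3[of i] unfolding downcl_def .
    ultimately have "x i \<in> f (Suc i)" using ij(2) by blast
    then show False using x2[of i] by contradiction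
  qed
  then show ?thesis unfolding wf_iff_no_infinite_down_chain .
qed

lemma lang_Star: "lang [Star B] = lists B"
proof
  show "lang [Star B] \<subseteq> lists B" by auto
next
  show "lists B \<subseteq> lang [Star B]"
  proof
    fix x assume "x \<in> lists B"
    then have "x @ [] \<in> lang [Star B]" by (intro lang_ConsI) simp_all
    then show "x \<in> lang [Star B]" by simp
  qed
qed

lemma decomp_gen:
  assumes fin: "finite B"
  shows "oks B P \<Longrightarrow> downcl D \<Longrightarrow> D \<subseteq> lang P \<Longrightarrow>
    \<exists>Ps. (\<forall>Q\<in>set Ps. oks B Q) \<and> D = \<Union>(lang ` set Ps)"
proof -
  define R where "R = {(P', P). oks B P' \<and> oks B P \<and> lang P' \<subset> lang P}"
  have "R \<subseteq> inv_image {(X, Y). X \<subset> Y \<and> Y \<subseteq> lists B \<and> downcl X} lang"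
    unfolding R_def inv_image_def using lang_lists downcl_lang by blast
  then have wfR: "wf R" using dcc[OF fin] wf_subset wf_inv_image by blast
  show "oks B P \<Longrightarrow> downcl D \<Longrightarrow> D \<subseteq> lang P \<Longrightarrow>
    \<exists>Ps. (\<forall>Q\<in>set Ps. oks B Q) \<and> D = \<Union>(lang ` set Ps)"
  proof (induction P arbitrary: D rule: wf_induct[OF wfR])
    case (1 P)
    show ?case
    proof (cases "D = lang P")
      case True
      then show ?thesis using 1(2) by (intro exI[of _ "[P]"]) simp
    next
      case False
      then obtain w where w: "w \<in> lang P" "w \<notin> D" using 1(4) by blast
      obtain Ps where cv: "covers B P w Ps" using cov[OF 1(2)] by blast
      have "\<exists>PsQ. (\<forall>Q'\<in>set PsQ. oks B Q') \<and> D \<inter> lang Q = \<Union>(lang ` set PsQ)" if Q: "Q \<in> set Ps" for Q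
      proof -
        have h: "oks B Q" "lang Q \<subseteq> lang P" "\<forall>x\<in>lang Q. \<not> subseq w x"
          using cv Q unfolding covers_def by blast+
        have "w \<notin> lang Q" using h(3) by blast
        then have "(Q, P) \<in> R" unfolding R_def using h(1,2) 1(2) w(1) by blast
        moreover have "downcl (D \<inter> lang Q)" using 1(3) downcl_lang[of Q] unfolding downcl_def by blast
        moreover have "D \<inter> lang Q \<subseteq> lang Q" by blast
        ultimately show ?thesis using 1(1) h(1) by blast
      qed
      then have "\<forall>Q\<in>set Ps. \<exists>PsQ. (\<forall>Q'\<in>set PsQ. oks B Q') \<and> D \<inter> lang Q = \<Union>(lang ` set PsQ)" by blast
      from bchoice[OF this] obtain F where F: "\<And>Q. Q \<in> set Ps \<Longrightarrow> (\<forall>Q'\<in>set (F Q). oks B Q') \<and> D \<inter> lang Q = \<Union>(lang ` set (F Q))"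
        by blast
      have Dcov: "D = (\<Union>Q\<in>set Ps. D \<inter> lang Q)"
      proof
        show "D \<subseteq> (\<Union>Q\<in>set Ps. D \<inter> lang Q)"
        proof
          fix x assume "x \<in> D"
          then have "\<not> subseq w x" using w(2) 1(3) unfolding downcl_def by blast
          then obtain Q where "Q \<in> set Ps" "x \<in> lang Q" using cv \<open>x \<in> D\<close> 1(4) unfolding covers_def by blast
          then show "x \<in> (\<Union>Q\<in>set Ps. D \<inter> lang Q)" using \<open>x \<in> D\<close> by blast
        qed
      qed blast
      have "(\<forall>Q'\<in>set (concat (map F Ps)). oks B Q') \<and> D = \<Union>(lang ` set (concat (map F Ps)))"
      proof
        show "\<forall>Q'\<in>set (concat (map F Ps)). oks B Q'" using F by auto
        have "\<Union>(lang ` set (concat (map F Ps))) = (\<Union>Q\<in>set Ps. \<Union>(lang ` set (F Q)))" by auto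
        also have "\<dots> = (\<Union>Q\<in>set Ps. D \<inter> lang Q)" using F by simp
        finally show "D = \<Union>(lang ` set (concat (map F Ps)))" using Dcov by simp
      qed
      then show ?thesis by blast
    qed
  qed
qed

lemma decomp:
  assumes "finite B" "downcl D" "D \<subseteq> lists B"
  shows "\<exists>Ps. (\<forall>Q\<in>set Ps. oks B Q) \<and> D = \<Union>(lang ` set Ps)"
proof -
  have "oks B [Star B]" unfolding oks_def by simp
  moreover have "D \<subseteq> lang [Star B]" using assms(3) lang_Star by blast
  ultimately show ?thesis using decomp_gen[OF assms(1)] assms(2) by blast
qed

lemma down_wqo:
  fixes D :: "nat \<Rightarrow> 'b list set"
  assumes fin: "finite B" and D: "\<And>i. downcl (D i)" "\<And>i. D i \<subseteq> lists B"
  shows "\<exists>i j. i < j \<and> D i \<subseteq> D j"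
proof -
  have "\<exists>Ps. (\<forall>Q\<in>set Ps. oks B Q) \<and> D i = \<Union>(lang ` set Ps)" for i
    using decomp[OF fin D(1) D(2)] .
  then have "\<forall>i. \<exists>Ps. (\<forall>Q\<in>set Ps. oks B Q) \<and> D i = \<Union>(lang ` set Ps)" by blast
  from choice[OF this] obtain Ps where Ps: "\<And>i. (\<forall>Q\<in>set (Ps i). oks B Q) \<and> D i = \<Union>(lang ` set (Ps i))"
    by blast
  define AT where "AT = Opt ` B \<union> Star ` Pow B"
  have finAT: "finite AT" unfolding AT_def using fin by simp
  have okAT: "oks B Q \<Longrightarrow> Q \<in> lists AT" for Q
  proof -
    assume "oks B Q"
    have "X \<in> AT" if "atom_ok B X" for X using that unfolding AT_def by (cases X) auto
    then show "Q \<in> lists AT" using \<open>oks B Q\<close> unfolding oks_def by auto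
  qed
  have a1: "almfull le_atom AT" by (rule af_finite[OF finAT]) (rule le_atom_refl)
  have a2: "almfull (list_emb le_atom) (lists AT)" by (rule higman[OF a1]) (rule le_atom_trans)
  have tr2: "list_emb le_atom x z" if "list_emb le_atom x y" "list_emb le_atom y z" for x y z
    using list_emb_trans[of x y z le_atom] le_atom_trans that by blast
  have a3: "almfull (list_emb (list_emb le_atom)) (lists (lists AT))" by (rule higman[OF a2 tr2])
  have "Ps i \<in> lists (lists AT)" for i using Ps[of i] okAT by auto
  then obtain i j where ij: "i < j" "list_emb (list_emb le_atom) (Ps i) (Ps j)"
    using almfullD[OF a3, of Ps] by blast
  have "D i \<subseteq> D j"
  proof
    fix x assume "x \<in> D i"
    then obtain Q where Q: "Q \<in> set (Ps i)" "x \<in> lang Q" using Ps[of i] by blast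
    then obtain Q' where "Q' \<in> set (Ps j)" "list_emb le_atom Q Q'" using list_emb_set[OF ij(2) Q(1)] by blast
    then show "x \<in> D j" using lang_mono Q(2) Ps[of j] by blast
  qed
  then show ?thesis using ij(1) by blast
qed

definition code :: "'a list \<Rightarrow> ('a \<times> nat + 'a set) list" where
  "code u = Inr (set u) # map Inl (phi u)"

lemma phi_fst: "map fst (phi u) = u"
  unfolding phi_def by (simp add: comp_def map_nth)

lemma set_phi: "set (phi u) \<subseteq> set u \<times> {0, 1}"
  unfolding phi_def by (auto split: if_split_asm)

lemma subseq_map_Inl: "subseq (map Inl p) (map Inl q) \<longleftrightarrow> subseq p q"
proof
  assume "subseq (map Inl p) (map Inl q)"
  from subseq_map[OF this, of "case_sum id (\<lambda>_. undefined)"]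
  show "subseq p q" by (simp add: comp_def)
qed (rule subseq_map)

lemma leE_code: "leE u v \<longleftrightarrow> subseq (code u) (code v)"
proof (cases "set u = set v")
  case True
  have "subseq (code u) (code v) \<longleftrightarrow> subseq (map Inl (phi u) :: ('a \<times> nat + 'a set) list) (map Inl (phi v))"
    unfolding code_def using True by simp
  also have "\<dots> \<longleftrightarrow> subseq (phi u) (phi v)" by (rule subseq_map_Inl)
  finally show ?thesis unfolding leE_def S_def emb_iff_subseq using True by simp
next
  case False
  have "\<not> subseq (Inr (set u) # map Inl (phi u)) (map Inl (phi v))"
  proof
    assume "subseq (Inr (set u) # map Inl (phi u)) (map Inl (phi v))"
    then have "set (Inr (set u) # map Inl (phi u)) \<subseteq> set (map Inl (phi v))" by (rule subseq_set)
    moreover have "Inr (set u) \<notin> set (map Inl (phi v) :: ('a \<times> nat + 'a set) list)" by auto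
    ultimately show False by simp
  qed
  then show ?thesis using False unfolding leE_def code_def S_def by simp
qed

lemma code_inj: "code u = code v \<Longrightarrow> u = v"
proof -
  assume "code u = code v"
  then have "map Inl (phi u) = (map Inl (phi v) :: ('a \<times> nat + 'a set) list)" unfolding code_def by simp
  then have "map (case_sum id (\<lambda>_. undefined)) (map Inl (phi u) :: ('a \<times> nat + 'a set) list) =
     map (case_sum id (\<lambda>_. undefined)) (map Inl (phi v) :: ('a \<times> nat + 'a set) list)" by (rule arg_cong)
  then have "phi u = phi v" by (simp add: comp_def)
  have "u = map fst (phi u)" by (rule phi_fst[symmetric])
  also have "\<dots> = map fst (phi v)" using \<open>phi u = phi v\<close> by (rule arg_cong)
  also have "\<dots> = v" by (rule phi_fst)
  finally show "u = v" .
qed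

definition BB :: "'a set \<Rightarrow> ('a \<times> nat + 'a set) set" where
  "BB A = Inl ` (A \<times> {0, 1}) \<union> Inr ` Pow A"

lemma finite_BB: "finite A \<Longrightarrow> finite (BB A)"
  unfolding BB_def by simp

lemma code_BB: "u \<in> words A \<Longrightarrow> code u \<in> lists (BB A)"
proof -
  assume "u \<in> words A"
  then have uA: "set u \<subseteq> A" unfolding words_def by simp
  have "set (phi u) \<subseteq> A \<times> {0, 1}" using set_phi[of u] uA by blast
  have 1: "Inr (set u) \<in> BB A" unfolding BB_def using uA by blast
  have 2: "Inl ` set (phi u) \<subseteq> BB A" unfolding BB_def using \<open>set (phi u) \<subseteq> A \<times> {0, 1}\<close> by blast
  have "set (code u) \<subseteq> BB A" unfolding code_def using 1 2 by simp
  then show ?thesis by (intro in_listsI) blast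
qed

lemma leE_good:
  fixes f :: "nat \<Rightarrow> 'a list"
  assumes "finite A" "\<And>i. f i \<in> words A"
  shows "\<exists>i j. i < j \<and> leE (f i) (f j)"
proof -
  have "\<exists>i j. i < j \<and> subseq (code (f i)) (code (f j))"
    by (rule almfullD[OF af_lists_eq[OF finite_BB[OF assms(1)]]]) (rule code_BB[OF assms(2)])
  then show ?thesis unfolding leE_code .
qed

lemma no_desc:
  fixes A :: "'a set"
  shows "\<not> (\<exists>f. descending_chain (words A) leE f)"
proof
  assume "\<exists>f. descending_chain (words A) leE f"
  then obtain f :: "nat \<Rightarrow> 'a list" where f: "descending_chain (words A) leE f" by (elim exE)
  define g where "g i = length (code (f i))" for i
  have lt: "g (Suc i) < g i" for i
  proof -
    have "leE (f (Suc i)) (f i)" "f (Suc i) \<noteq> f i" using f unfolding descending_chain_def by blast+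
    then have s: "subseq (code (f (Suc i))) (code (f i))" and ne: "code (f (Suc i)) \<noteq> code (f i)"
      using leE_code code_inj by blast+
    have "g (Suc i) \<le> g i" using list_emb_length[OF s] unfolding g_def .
    moreover have "g (Suc i) \<noteq> g i"
    proof
      assume "g (Suc i) = g i"
      then have "code (f (Suc i)) = code (f i)" using subseq_same_length[OF s] unfolding g_def by simp
      then show False using ne by contradiction
    qed
    ultimately show ?thesis by simp
  qed
  have "g i + i \<le> g 0" for i
  proof (induction i)
    case 0 then show ?case by simp
  next
    case (Suc i) then show ?case using lt[of i] by simp
  qed
  then have "g (Suc (g 0)) + Suc (g 0) \<le> g 0" .
  then show False by simp
qed

lemma no_anti:
  fixes A :: "'a set"
  assumes "finite A"
  shows "\<not> (\<exists>f. antichain (words A) leE f)"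
proof
  assume "\<exists>f. antichain (words A) leE f"
  then obtain f :: "nat \<Rightarrow> 'a list" where f: "antichain (words A) leE f" by (elim exE)
  have "f i \<in> words A" for i using f unfolding antichain_def by blast
  then obtain i j where ij: "i < j" "leE (f i) (f j)" using leE_good[OF assms] by blast
  then have "i = j" using f unfolding antichain_def by blast
  then show False using ij(1) by simp
qed

lemma no_asc:
  fixes A :: "'a set"
  assumes "finite A"
  shows "\<not> (\<exists>F. ascending_chain (upsets (words A) leE) (\<subseteq>) F)"
proof
  assume "\<exists>F. ascending_chain (upsets (words A) leE) (\<subseteq>) F"
  then obtain F :: "nat \<Rightarrow> 'a list set" where F: "ascending_chain (upsets (words A) leE) (\<subseteq>) F"
    by (elim exE)
  have up: "upward_closed (words A) leE (F i)" for i using F unfolding ascending_chain_def upsets_def by blast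
  have inc: "F i \<subseteq> F (Suc i)" and ne: "F i \<noteq> F (Suc i)" for i using F unfolding ascending_chain_def by blast+
  have ex: "\<exists>x. x \<in> F (Suc i) \<and> x \<notin> F i" for i using inc[of i] ne[of i] by blast
  define x where "x i = (SOME x. x \<in> F (Suc i) \<and> x \<notin> F i)" for i
  have x1: "x i \<in> F (Suc i)" and x2: "x i \<notin> F i" for i
    using someI_ex[OF ex[of i]] unfolding x_def by simp_all
  have xw: "x i \<in> words A" for i using up[of "Suc i"] x1[of i] unfolding upward_closed_def by blast
  obtain i j where ij: "i < j" "leE (x i) (x j)" using leE_good[OF assms xw] by blast
  have mono: "F (Suc i) \<subseteq> F (Suc i + d)" for d
  proof (induction d)
    case 0 then show ?case by simp
  next
    case (Suc d)
    have "F (Suc i + d) \<subseteq> F (Suc i + Suc d)" using inc[of "Suc i + d"] by simp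
    with Suc.IH show ?case by (rule subset_trans)
  qed
  have "j = Suc i + (j - Suc i)" using ij(1) by simp
  then have "F (Suc i) \<subseteq> F j" using mono[of "j - Suc i"] by simp
  then have "x i \<in> F j" using x1[of i] by blast
  then have "x j \<in> F j" using up[of j] xw[of j] ij(2) unfolding upward_closed_def by blast
  then show False using x2[of j] by contradiction
qed

lemma no_anti_up:
  fixes A :: "'a set"
  assumes fin: "finite A"
  shows "\<not> (\<exists>F. antichain (upsets (words A) leE) (\<subseteq>) F)"
proof
  assume "\<exists>F. antichain (upsets (words A) leE) (\<subseteq>) F"
  then obtain F :: "nat \<Rightarrow> 'a list set" where F: "antichain (upsets (words A) leE) (\<subseteq>) F"
    by (elim exE)
  have up: "upward_closed (words A) leE (F i)" for i using F unfolding antichain_def upsets_def by blast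
  define E where "E i = {y. \<exists>x\<in>words A - F i. subseq y (code x)}" for i
  have dE: "downcl (E i)" for i
    unfolding downcl_def E_def using subseq_order.trans by blast
  have EB: "E i \<subseteq> lists (BB A)" for i
  proof
    fix y assume "y \<in> E i"
    then obtain x where x: "x \<in> words A" "subseq y (code x)" unfolding E_def by blast
    have "set y \<subseteq> set (code x)" using subseq_set[OF x(2)] .
    moreover have "set (code x) \<subseteq> BB A" using code_BB[OF x(1)] by blast
    ultimately show "y \<in> lists (BB A)" by blast
  qed
  obtain i j where ij: "i < j" "E i \<subseteq> E j" using down_wqo[OF finite_BB[OF fin] dE EB] by blast
  have "F j \<subseteq> F i"
  proof
    fix z assume zj: "z \<in> F j"
    have zw: "z \<in> words A" using up[of j] zj unfolding upward_closed_def by blast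
    show "z \<in> F i"
    proof (rule ccontr)
      assume "z \<notin> F i"
      then have "code z \<in> E i" unfolding E_def using zw by blast
      then have "code z \<in> E j" using ij(2) by blast
      then obtain x where x: "x \<in> words A" "x \<notin> F j" "subseq (code z) (code x)" unfolding E_def by blast
      then have "leE z x" using leE_code by blast
      then have "x \<in> F j" using up[of j] zj x(1) unfolding upward_closed_def by blast
      then show False using x(2) by contradiction
    qed
  qed
  then have "j = i" using F unfolding antichain_def by blast
  then show False using ij(1) by simp
qed

theorem theorem1p3:
  fixes A :: "'a set"
  assumes "finite A"
  shows "(\<not> (\<exists>f. descending_chain (words A) leE f) \<and> \<not> (\<exists>f. antichain (words A) leE f))
       \<and> (\<not> (\<exists>F. ascending_chain (upsets (words A) leE) (\<subseteq>) F)
          \<and> \<not> (\<exists>F. antichain (upsets (words A) leE) (\<subseteq>) F))"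
  using no_desc[of A] no_anti[OF assms] no_asc[OF assms] no_anti_up[OF assms] by blast

end
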